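(* Let $A$ and $B$ be real symmetric matrices such that $A\in\mathcal{S}(G_A)$ has the strong spectral property with respect to $H_A$ and $B\in\mathcal{S}(G_B)$ has the strong spectral property with respect to $H_B$, where $G_A$ is a spanning subgraph of $H_A$ and $G_B$ is a spanning subgraph of $H_B$. If $A$ and $B$ have no common eigenvalues, then $A\oplus B$ has the strong spectral property with respect to the disjoint union $H_A\oplus H_B$.
   Context: For a graph $G$ on $\{1,\ldots,n\}$, $\mathcal{S}(G)$ is the set of $n\times n$ real symmetric matrices $A=(a_{ij})$ with, for $i\neq j$, $a_{ij}\neq0$ iff $\{i,j\}\in E(G)$; $\mathcal{S}^{\rm cl}(G)$ is the set of $n\times n$ real symmetric matrices whose $(i,j)$-entry, $i\neq j$, is nonzero only if $\{i,j\}\in E(G)$. $\overline{H}$ is the complement of $H$. If $A\in\mathcal{S}(G)$ and $H$ is a graph on the same vertex set with $E(G)\subseteq E(H)$, then $A$ has the strong spectral property with respect to $H$ if the only real symmetric $X$ with $X\in\mathcal{S}^{\rm cl}(\overline{H})$, $I\circ X=O$ and $AX-XA=O$ is $X=O$. $A\oplus B$ is the block diagonal direct sum, with vertices of $H_B$ indexed after those of $H_A$. *)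

theory Defs
  imports "Jordan_Normal_Form.Char_Poly"
begin

definition is_graph :: "nat \<Rightarrow> nat set set \<Rightarrow> bool" where
  "is_graph n E \<longleftrightarrow> (\<forall>e\<in>E. \<exists>i j. e = {i, j} \<and> i \<noteq> j \<and> i < n \<and> j < n)"

definition compl_graph :: "nat \<Rightarrow> nat set set \<Rightarrow> nat set set" where
  "compl_graph n E = {{i, j} | i j. i \<noteq> j \<and> i < n \<and> j < n \<and> {i, j} \<notin> E}"

definition sym_real_mat :: "nat \<Rightarrow> real mat \<Rightarrow> bool" where
  "sym_real_mat n A \<longleftrightarrow> A \<in> carrier_mat n n \<and> A\<^sup>T = A"

definition S_pattern :: "nat \<Rightarrow> nat set set \<Rightarrow> real mat set" where
  "S_pattern n G = {A. sym_real_mat n A \<and>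
     (\<forall>i<n. \<forall>j<n. i \<noteq> j \<longrightarrow> (A $$ (i, j) \<noteq> 0 \<longleftrightarrow> {i, j} \<in> G))}"

definition S_cl :: "nat \<Rightarrow> nat set set \<Rightarrow> real mat set" where
  "S_cl n G = {A. sym_real_mat n A \<and>
     (\<forall>i<n. \<forall>j<n. i \<noteq> j \<longrightarrow> A $$ (i, j) \<noteq> 0 \<longrightarrow> {i, j} \<in> G)}"

(* I \<circ> X = O : Hadamard product with the identity is zero, i.e. zero diagonal *)
definition zero_diag :: "nat \<Rightarrow> real mat \<Rightarrow> bool" where
  "zero_diag n X \<longleftrightarrow> (\<forall>i<n. X $$ (i, i) = 0)"

definition SSP_wrt :: "nat \<Rightarrow> real mat \<Rightarrow> nat set set \<Rightarrow> bool" where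
  "SSP_wrt n A H \<longleftrightarrow> (\<forall>X. X \<in> S_cl n (compl_graph n H) \<and> zero_diag n X \<and>
       A * X - X * A = 0\<^sub>m n n \<longrightarrow> X = 0\<^sub>m n n)"

definition graph_dunion :: "nat \<Rightarrow> nat set set \<Rightarrow> nat set set \<Rightarrow> nat set set" where
  "graph_dunion nA HA HB = HA \<union> (\<lambda>e. (\<lambda>i. i + nA) ` e) ` HB"

definition mat_dsum :: "real mat \<Rightarrow> real mat \<Rightarrow> real mat" where
  "mat_dsum A B = four_block_mat A (0\<^sub>m (dim_row A) (dim_col B)) (0\<^sub>m (dim_row B) (dim_col A)) B"

end

theory Submission imports Defs "Jordan_Normal_Form.Schur_Decomposition"
begin

lemma herm_eig_real:
  fixes A :: "real mat" and v :: "complex vec"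
  assumes A: "A \<in> carrier_mat n n" and sym: "A\<^sup>T = A"
    and v: "v \<in> carrier_vec n" "v \<noteq> 0\<^sub>v n"
    and ev: "map_mat complex_of_real A *\<^sub>v v = a \<cdot>\<^sub>v v"
  shows "Im a = 0"
proof -
  have symE: "\<And>i j. i < n \<Longrightarrow> j < n \<Longrightarrow> A $$ (j, i) = A $$ (i, j)"
    using sym A by (metis carrier_matD index_transpose_mat(1))
  define s where "s = (\<Sum>i<n. \<Sum>j<n. cnj (v$i) * complex_of_real (A$$(i,j)) * v$j)"
  have Cv: "\<And>i. i < n \<Longrightarrow> (\<Sum>j<n. complex_of_real (A$$(i,j)) * v$j) = a * v$i"
  proof -
    fix i assume i: "i < n"
    have "(map_mat complex_of_real A *\<^sub>v v) $ i = a * v$i" using ev i v by simp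
    moreover have "(map_mat complex_of_real A *\<^sub>v v) $ i = (\<Sum>j<n. complex_of_real (A$$(i,j)) * v$j)"
      using i v A by (auto simp: scalar_prod_def lessThan_atLeast0 intro!: sum.cong)
    ultimately show "(\<Sum>j<n. complex_of_real (A$$(i,j)) * v$j) = a * v$i" by simp
  qed
  have s1: "s = a * complex_of_real (\<Sum>i<n. (cmod (v$i))^2)"
  proof -
    have "s = (\<Sum>i<n. cnj (v$i) * (\<Sum>j<n. complex_of_real (A$$(i,j)) * v$j))"
      unfolding s_def by (simp add: sum_distrib_left mult.assoc)
    also have "\<dots> = (\<Sum>i<n. cnj (v$i) * (a * v$i))" using Cv by simp
    also have "\<dots> = (\<Sum>i<n. a * complex_of_real ((cmod (v$i))^2))"
    proof (intro sum.cong refl)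
      fix i
      have "complex_of_real ((cmod (v$i))^2) = v$i * cnj (v$i)"
        using complex_norm_square[of "v$i"] by simp
      then show "cnj (v$i) * (a * v$i) = a * complex_of_real ((cmod (v$i))^2)"
        by (simp add: ac_simps)
    qed
    finally show ?thesis by (simp add: sum_distrib_left)
  qed
  have s2: "cnj s = s"
  proof -
    have "cnj s = (\<Sum>i<n. \<Sum>j<n. v$i * complex_of_real (A$$(i,j)) * cnj (v$j))"
      unfolding s_def by simp
    also have "\<dots> = (\<Sum>j<n. \<Sum>i<n. v$i * complex_of_real (A$$(i,j)) * cnj (v$j))"
      by (rule sum.swap)
    also have "\<dots> = s" unfolding s_def
      by (intro sum.cong refl) (simp add: symE mult.commute mult.left_commute)
    finally show ?thesis .
  qed
  have r: "(\<Sum>i<n. (cmod (v$i))^2) > 0"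
  proof -
    obtain i where i: "i < n" "v$i \<noteq> 0" using v by (metis eq_vecI carrier_vecD index_zero_vec)
    have "(cmod (v$i))^2 \<le> (\<Sum>i<n. (cmod (v$i))^2)"
      by (rule member_le_sum) (use i in auto)
    moreover have "(cmod (v$i))^2 > 0" using i by simp
    ultimately show ?thesis by linarith
  qed
  have "Im s = 0" using s2 by (metis cnj.simps(2) neg_equal_zero)
  then have "Im a * (\<Sum>i<n. (cmod (v$i))^2) = 0" using s1 by simp
  then show ?thesis using r by simp
qed

lemma sym_real_splits:
  fixes A :: "real mat" assumes A: "A \<in> carrier_mat n n" and sym: "A\<^sup>T = A"
  shows "\<exists>es. char_poly A = (\<Prod>e\<leftarrow>es. [:-e,1:])"
proof -
  let ?C = "map_mat complex_of_real A"
  have C: "?C \<in> carrier_mat n n" using A by simp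
  obtain as where cp: "char_poly ?C = (\<Prod>a\<leftarrow>as. [:-a,1:])" using char_poly_factorized[OF C] by blast
  have hom: "char_poly ?C = map_poly of_real (char_poly A)" by (rule of_real_hom.char_poly_hom[OF A])
  have real: "\<forall>a\<in>set as. a = of_real (Re a)"
  proof
    fix a assume a: "a \<in> set as"
    then have "poly (char_poly ?C) a = 0" unfolding cp poly_prod_list
      by (auto simp: prod_list_zero_iff)
    then have "eigenvalue ?C a" using eigenvalue_root_char_poly[OF C] by simp
    then obtain v where v: "v \<in> carrier_vec n" "v \<noteq> 0\<^sub>v n" "?C *\<^sub>v v = a \<cdot>\<^sub>v v"
      unfolding eigenvalue_def eigenvector_def using C by auto
    have "Im a = 0" by (rule herm_eig_real[OF A sym v])
    then show "a = of_real (Re a)" by (simp add: complex_eq_iff)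
  qed
  define es where "es = map Re as"
  have "map_poly complex_of_real (\<Prod>e\<leftarrow>es. [:-e,1:]) = (\<Prod>e\<leftarrow>es. [:- complex_of_real e,1:])"
  proof -
    interpret m: map_poly_comm_ring_hom "of_real :: real \<Rightarrow> complex" ..
    show ?thesis by (induct es) (simp_all del: mult_pCons_left add: m.hom_mult m.map_poly_pCons_hom)
  qed
  also have "\<dots> = (\<Prod>a\<leftarrow>as. [:-a,1:])" unfolding es_def using real
    by (induct as) auto
  finally have eq: "map_poly complex_of_real (char_poly A) = map_poly complex_of_real (\<Prod>e\<leftarrow>es. [:-e,1:])"
    using cp hom by simp
  have "char_poly A = (\<Prod>e\<leftarrow>es. [:-e,1:])"
  proof (rule poly_eqI)
    fix i
    from arg_cong[OF eq, of "\<lambda>p. coeff p i"] show "coeff (char_poly A) i = coeff (\<Prod>e\<leftarrow>es. [:-e,1:]) i"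
      by (simp add: coeff_map_poly)
  qed
  then show ?thesis by blast
qed


lemma mult_entry:
  fixes A B :: "'a::comm_semiring_0 mat"
  assumes "A \<in> carrier_mat n m" "B \<in> carrier_mat m k" "i < n" "j < k"
  shows "(A * B) $$ (i, j) = (\<Sum>l<m. A $$ (i, l) * B $$ (l, j))"
  using assms by (auto simp: scalar_prod_def lessThan_atLeast0 intro!: sum.cong)

lemma sylv:
  fixes A B Y :: "real mat"
  assumes A: "A \<in> carrier_mat nA nA" and As: "A\<^sup>T = A"
    and B: "B \<in> carrier_mat nB nB" and Bs: "B\<^sup>T = B"
    and Y: "Y \<in> carrier_mat nA nB" and AY: "A * Y = Y * B"
    and ne: "\<not> (\<exists>t. eigenvalue A t \<and> eigenvalue B t)"
  shows "Y = 0\<^sub>m nA nB"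
proof -
  obtain es where cp: "char_poly A = (\<Prod>e\<leftarrow>es. [:-e,1:])" using sym_real_splits[OF A As] by blast
  obtain T P Q where sd: "schur_decomposition A es = (T,P,Q)" by (cases "schur_decomposition A es") auto
  from schur_decomposition[OF A cp sd] have sim: "similar_mat_wit A T P Q"
    and ut: "upper_triangular T" and dg: "diag_mat T = es" by auto
  note D = similar_mat_witD2[OF A sim]
  have T: "T \<in> carrier_mat nA nA" and P: "P \<in> carrier_mat nA nA" and Q: "Q \<in> carrier_mat nA nA"
    using D by auto
  have QA: "Q * A = T * Q"
  proof -
    have "Q * A = Q * (P * T * Q)" using D by simp
    also have "\<dots> = (Q * P) * T * Q" using P T Q by (simp add: assoc_mult_mat[of _ nA nA _ nA])
    also have "\<dots> = T * Q" using D T Q by simp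
    finally show ?thesis .
  qed
  define Z where "Z = Q * Y"
  have Z: "Z \<in> carrier_mat nA nB" unfolding Z_def using Q Y by simp
  have TZ: "T * Z = Z * B"
  proof -
    have "T * Z = (T * Q) * Y" unfolding Z_def using T Q Y by simp
    also have "\<dots> = Q * (A * Y)" using QA[symmetric] Q A Y by simp
    also have "\<dots> = (Q * Y) * B" using AY Q Y B by simp
    finally show ?thesis unfolding Z_def .
  qed
  have rows: "\<forall>j<nB. Z $$ (i, j) = 0" if "i < nA" for i
    using that
  proof (induct "nA - i" arbitrary: i rule: less_induct)
    case (less i)
    define t where "t = T $$ (i, i)"
    have teA: "eigenvalue A t"
    proof -
      have "t \<in> set es" unfolding t_def dg[symmetric] diag_mat_def using less T by auto
      then have "poly (char_poly A) t = 0" unfolding cp poly_prod_list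
        by (auto simp: prod_list_zero_iff)
      then show ?thesis using eigenvalue_root_char_poly[OF A] by simp
    qed
    define w where "w = vec nB (\<lambda>k. Z $$ (i, k))"
    have Bw: "B *\<^sub>v w = t \<cdot>\<^sub>v w"
    proof (rule eq_vecI)
      fix j assume j: "j < dim_vec (t \<cdot>\<^sub>v w)"
      then have j: "j < nB" unfolding w_def by simp
      have "(B *\<^sub>v w) $ j = (\<Sum>k<nB. Z $$ (i, k) * B $$ (k, j))"
      proof -
        have "(B *\<^sub>v w) $ j = (\<Sum>k<nB. B $$ (j, k) * Z $$ (i, k))"
          using B j unfolding w_def by (auto simp: scalar_prod_def lessThan_atLeast0 intro!: sum.cong)
        also have "\<dots> = (\<Sum>k<nB. Z $$ (i, k) * B $$ (k, j))"
        proof (intro sum.cong refl)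
          fix k assume "k \<in> {..<nB}"
          then have "B $$ (j, k) = B $$ (k, j)" using Bs B j
            by (metis carrier_matD index_transpose_mat(1) lessThan_iff)
          then show "B $$ (j, k) * Z $$ (i, k) = Z $$ (i, k) * B $$ (k, j)" by simp
        qed
        finally show ?thesis .
      qed
      also have "\<dots> = (Z * B) $$ (i, j)" using mult_entry[OF Z B less(2) j] by simp
      also have "\<dots> = (T * Z) $$ (i, j)" using TZ by simp
      also have "\<dots> = (\<Sum>k<nA. T $$ (i, k) * Z $$ (k, j))" using mult_entry[OF T Z less(2) j] by simp
      also have "\<dots> = (\<Sum>k<nA. if k = i then t * Z $$ (i, j) else 0)"
      proof (intro sum.cong refl)
        fix k assume k: "k \<in> {..<nA}"
        show "T $$ (i, k) * Z $$ (k, j) = (if k = i then t * Z $$ (i, j) else 0)"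
        proof (cases "k < i")
          case True
          then have "T $$ (i, k) = 0" using ut less(2) T unfolding upper_triangular_def by auto
          then show ?thesis using True by simp
        next
          case False
          show ?thesis
          proof (cases "k = i")
            case True then show ?thesis unfolding t_def by simp
          next
            case ne: False
            with False have "i < k" by simp
            then have "Z $$ (k, j) = 0" using less(1)[of k] k j by auto
            then show ?thesis using ne by simp
          qed
        qed
      qed
      also have "\<dots> = t * Z $$ (i, j)" using less(2) by simp
      also have "\<dots> = (t \<cdot>\<^sub>v w) $ j" unfolding w_def using j by simp
      finally show "(B *\<^sub>v w) $ j = (t \<cdot>\<^sub>v w) $ j" .
    next
      show "dim_vec (B *\<^sub>v w) = dim_vec (t \<cdot>\<^sub>v w)" using B unfolding w_def by simp
    qed
    have "w = 0\<^sub>v nB"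
    proof (rule ccontr)
      assume "w \<noteq> 0\<^sub>v nB"
      then have "eigenvector B w t" unfolding eigenvector_def using B Bw unfolding w_def by auto
      then have "eigenvalue B t" unfolding eigenvalue_def by blast
      with teA ne show False by blast
    qed
    then show ?case unfolding w_def
      by (metis index_vec index_zero_vec(1))
  qed
  have Z0: "Z = 0\<^sub>m nA nB" by (rule eq_matI) (use rows Z in auto)
  have "Y = (P * Q) * Y" using D Y by simp
  also have "\<dots> = P * Z" unfolding Z_def using P Q Y by simp
  also have "\<dots> = 0\<^sub>m nA nB" unfolding Z0 using P by simp
  finally show ?thesis .
qed


lemma sum_split_nat: fixes a b :: nat shows "(\<Sum>k<a+b. f k) = (\<Sum>k<a. f k) + (\<Sum>k<b. f (k + a))"
  by (induct b) (auto simp: add_ac)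

lemma dsum_entry:
  assumes A: "A \<in> carrier_mat nA nA" and B: "B \<in> carrier_mat nB nB"
    and i: "i < nA + nB" and k: "k < nA + nB"
  shows "mat_dsum A B $$ (i, k) = (if i < nA then (if k < nA then A $$ (i, k) else 0)
     else (if k < nA then 0 else B $$ (i - nA, k - nA)))"
  using A B i k unfolding mat_dsum_def by (auto simp: index_mat_four_block)

lemma dsum_carrier:
  assumes A: "A \<in> carrier_mat nA nA" and B: "B \<in> carrier_mat nB nB"
  shows "mat_dsum A B \<in> carrier_mat (nA + nB) (nA + nB)"
  using A B unfolding mat_dsum_def by auto

lemma dsum_left:
  fixes A B X :: "real mat"
  assumes A: "A \<in> carrier_mat nA nA" and B: "B \<in> carrier_mat nB nB"
    and X: "X \<in> carrier_mat (nA + nB) (nA + nB)" and i: "i < nA + nB" and j: "j < nA + nB"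
  shows "(mat_dsum A B * X) $$ (i, j) = (if i < nA then (\<Sum>k<nA. A $$ (i, k) * X $$ (k, j))
     else (\<Sum>k<nB. B $$ (i - nA, k) * X $$ (k + nA, j)))"
proof -
  have "(mat_dsum A B * X) $$ (i, j) = (\<Sum>k<nA+nB. mat_dsum A B $$ (i, k) * X $$ (k, j))"
    by (rule mult_entry[OF dsum_carrier[OF A B] X i j])
  also have "\<dots> = (\<Sum>k<nA. mat_dsum A B $$ (i, k) * X $$ (k, j)) + (\<Sum>k<nB. mat_dsum A B $$ (i, k + nA) * X $$ (k + nA, j))"
    by (rule sum_split_nat)
  finally show ?thesis using i by (simp add: dsum_entry[OF A B])
qed

lemma dsum_right:
  fixes A B X :: "real mat"
  assumes A: "A \<in> carrier_mat nA nA" and B: "B \<in> carrier_mat nB nB"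
    and X: "X \<in> carrier_mat (nA + nB) (nA + nB)" and i: "i < nA + nB" and j: "j < nA + nB"
  shows "(X * mat_dsum A B) $$ (i, j) = (if j < nA then (\<Sum>k<nA. X $$ (i, k) * A $$ (k, j))
     else (\<Sum>k<nB. X $$ (i, k + nA) * B $$ (k, j - nA)))"
proof -
  have "(X * mat_dsum A B) $$ (i, j) = (\<Sum>k<nA+nB. X $$ (i, k) * mat_dsum A B $$ (k, j))"
    by (rule mult_entry[OF X dsum_carrier[OF A B] i j])
  also have "\<dots> = (\<Sum>k<nA. X $$ (i, k) * mat_dsum A B $$ (k, j)) + (\<Sum>k<nB. X $$ (i, k + nA) * mat_dsum A B $$ (k + nA, j))"
    by (rule sum_split_nat)
  finally show ?thesis using j by (simp add: dsum_entry[OF A B])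
qed


theorem proposition3p5:
  fixes nA nB :: nat and A B :: "real mat" and GA HA GB HB :: "nat set set"
  assumes "is_graph nA GA" and "is_graph nA HA" and "GA \<subseteq> HA"
    and "is_graph nB GB" and "is_graph nB HB" and "GB \<subseteq> HB"
    and "A \<in> S_pattern nA GA" and "B \<in> S_pattern nB GB"
    and "SSP_wrt nA A HA" and "SSP_wrt nB B HB"
    and "\<not> (\<exists>t. eigenvalue A t \<and> eigenvalue B t)"
  shows "SSP_wrt (nA + nB) (mat_dsum A B) (graph_dunion nA HA HB)"
proof -
  have A: "A \<in> carrier_mat nA nA" and As: "A\<^sup>T = A"
    using assms(7) unfolding S_pattern_def sym_real_mat_def by auto
  have B: "B \<in> carrier_mat nB nB" and Bs: "B\<^sup>T = B"
    using assms(8) unfolding S_pattern_def sym_real_mat_def by auto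
  let ?n = "nA + nB"
  let ?D = "mat_dsum A B"
  let ?H = "graph_dunion nA HA HB"
  show ?thesis unfolding SSP_wrt_def
  proof (intro allI impI)
    fix X assume "X \<in> S_cl ?n (compl_graph ?n ?H) \<and> zero_diag ?n X \<and> ?D * X - X * ?D = 0\<^sub>m ?n ?n"
    then have XS: "X \<in> S_cl ?n (compl_graph ?n ?H)" and zd: "zero_diag ?n X"
      and cm: "?D * X - X * ?D = 0\<^sub>m ?n ?n" by auto
    have X: "X \<in> carrier_mat ?n ?n" and Xs: "X\<^sup>T = X"
      using XS unfolding S_cl_def sym_real_mat_def by auto
    have sym: "X $$ (j, i) = X $$ (i, j)" if "i < ?n" "j < ?n" for i j
      using Xs X that by (metis carrier_matD index_transpose_mat(1))
    have supp: "{i, j} \<notin> ?H" if "i < ?n" "j < ?n" "i \<noteq> j" "X $$ (i, j) \<noteq> 0" for i j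
    proof -
      have "{i, j} \<in> compl_graph ?n ?H" using XS that unfolding S_cl_def by auto
      then obtain i' j' where "{i, j} = {i', j'}" "{i', j'} \<notin> ?H"
        unfolding compl_graph_def by blast
      then show ?thesis by simp
    qed
    have comm: "(?D * X) $$ (i, j) = (X * ?D) $$ (i, j)" if "i < ?n" "j < ?n" for i j
    proof -
      have "(?D * X - X * ?D) $$ (i, j) = 0" using cm that by simp
      then show ?thesis using that X A B dsum_carrier[OF A B] by simp
    qed
    define X1 where "X1 = mat nA nA (\<lambda>(i, j). X $$ (i, j))"
    define X2 where "X2 = mat nB nB (\<lambda>(i, j). X $$ (i + nA, j + nA))"
    define Y where "Y = mat nA nB (\<lambda>(i, j). X $$ (i, j + nA))"
    have X1: "X1 \<in> carrier_mat nA nA" and X2: "X2 \<in> carrier_mat nB nB" and Y: "Y \<in> carrier_mat nA nB"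
      unfolding X1_def X2_def Y_def by auto
    have "X1 = 0\<^sub>m nA nA"
    proof -
      have c1: "A * X1 = X1 * A"
      proof (rule eq_matI)
        fix i j assume ij: "i < dim_row (X1 * A)" "j < dim_col (X1 * A)"
        then have i: "i < nA" and j: "j < nA" using X1 A by auto
        have "(A * X1) $$ (i, j) = (?D * X) $$ (i, j)"
          using mult_entry[OF A X1 i j] dsum_left[OF A B X, of i j] i j unfolding X1_def by simp
        also have "\<dots> = (X * ?D) $$ (i, j)" using comm i j by simp
        also have "\<dots> = (X1 * A) $$ (i, j)"
          using mult_entry[OF X1 A i j] dsum_right[OF A B X, of i j] i j unfolding X1_def by simp
        finally show "(A * X1) $$ (i, j) = (X1 * A) $$ (i, j)" .
      qed (use A X1 in auto)
      have "X1 \<in> S_cl nA (compl_graph nA HA)"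
        unfolding S_cl_def sym_real_mat_def
      proof (intro CollectI conjI allI impI)
        show "X1 \<in> carrier_mat nA nA" by (rule X1)
        show "X1\<^sup>T = X1" by (rule eq_matI) (use sym in \<open>auto simp: X1_def\<close>)
      next
        fix i j assume ij: "i < nA" "j < nA" "i \<noteq> j" "X1 $$ (i, j) \<noteq> 0"
        then have "{i, j} \<notin> ?H" using supp[of i j] unfolding X1_def by auto
        then have "{i, j} \<notin> HA" unfolding graph_dunion_def by auto
        then show "{i, j} \<in> compl_graph nA HA" unfolding compl_graph_def using ij by blast
      qed
      moreover have "zero_diag nA X1" using zd unfolding zero_diag_def X1_def by auto
      moreover have "A * X1 - X1 * A = 0\<^sub>m nA nA" using c1 X1 A by (simp add: minus_r_inv_mat)
      ultimately show ?thesis using assms(9) unfolding SSP_wrt_def by blast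
    qed
    then have X10: "X $$ (i, j) = 0" if "i < nA" "j < nA" for i j
      using that unfolding X1_def by (metis case_prod_conv index_mat(1) index_zero_mat(1))
    have "X2 = 0\<^sub>m nB nB"
    proof -
      have c2: "B * X2 = X2 * B"
      proof (rule eq_matI)
        fix i j assume ij: "i < dim_row (X2 * B)" "j < dim_col (X2 * B)"
        then have i: "i < nB" and j: "j < nB" using X2 B by auto
        have "(B * X2) $$ (i, j) = (?D * X) $$ (i + nA, j + nA)"
          using mult_entry[OF B X2 i j] dsum_left[OF A B X, of "i + nA" "j + nA"] i j unfolding X2_def by simp
        also have "\<dots> = (X * ?D) $$ (i + nA, j + nA)" using comm i j by simp
        also have "\<dots> = (X2 * B) $$ (i, j)"
          using mult_entry[OF X2 B i j] dsum_right[OF A B X, of "i + nA" "j + nA"] i j unfolding X2_def by simp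
        finally show "(B * X2) $$ (i, j) = (X2 * B) $$ (i, j)" .
      qed (use B X2 in auto)
      have "X2 \<in> S_cl nB (compl_graph nB HB)"
        unfolding S_cl_def sym_real_mat_def
      proof (intro CollectI conjI allI impI)
        show "X2 \<in> carrier_mat nB nB" by (rule X2)
        show "X2\<^sup>T = X2" by (rule eq_matI) (use sym in \<open>auto simp: X2_def\<close>)
      next
        fix i j assume ij: "i < nB" "j < nB" "i \<noteq> j" "X2 $$ (i, j) \<noteq> 0"
        then have "{i + nA, j + nA} \<notin> ?H" using supp[of "i + nA" "j + nA"] unfolding X2_def by auto
        moreover have "(\<lambda>x. x + nA) ` {i, j} = {i + nA, j + nA}" by auto
        ultimately have "{i, j} \<notin> HB" unfolding graph_dunion_def by (metis UnI2 image_eqI)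
        then show "{i, j} \<in> compl_graph nB HB" unfolding compl_graph_def using ij by blast
      qed
      moreover have "zero_diag nB X2" using zd unfolding zero_diag_def X2_def by auto
      moreover have "B * X2 - X2 * B = 0\<^sub>m nB nB" using c2 X2 B by (simp add: minus_r_inv_mat)
      ultimately show ?thesis using assms(10) unfolding SSP_wrt_def by blast
    qed
    then have X20: "X $$ (i + nA, j + nA) = 0" if "i < nB" "j < nB" for i j
      using that unfolding X2_def by (metis case_prod_conv index_mat(1) index_zero_mat(1))
    have "A * Y = Y * B"
    proof (rule eq_matI)
      fix i j assume ij: "i < dim_row (Y * B)" "j < dim_col (Y * B)"
      then have i: "i < nA" and j: "j < nB" using Y B by auto
      have "(A * Y) $$ (i, j) = (?D * X) $$ (i, j + nA)"
        using mult_entry[OF A Y i j] dsum_left[OF A B X, of i "j + nA"] i j unfolding Y_def by simp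
      also have "\<dots> = (X * ?D) $$ (i, j + nA)" using comm i j by simp
      also have "\<dots> = (Y * B) $$ (i, j)"
        using mult_entry[OF Y B i j] dsum_right[OF A B X, of i "j + nA"] i j unfolding Y_def by simp
      finally show "(A * Y) $$ (i, j) = (Y * B) $$ (i, j)" .
    qed (use A Y B in auto)
    then have "Y = 0\<^sub>m nA nB" using sylv[OF A As B Bs Y _ assms(11)] by simp
    then have Y0: "X $$ (i, j + nA) = 0" if "i < nA" "j < nB" for i j
      using that unfolding Y_def by (metis case_prod_conv index_mat(1) index_zero_mat(1))
    show "X = 0\<^sub>m ?n ?n"
    proof (rule eq_matI)
      fix i j assume "i < dim_row (0\<^sub>m ?n ?n :: real mat)" "j < dim_col (0\<^sub>m ?n ?n :: real mat)"
      then have i: "i < ?n" and j: "j < ?n" by auto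
      have "X $$ (i, j) = 0"
      proof (cases "i < nA")
        case True
        show ?thesis
        proof (cases "j < nA")
          case True then show ?thesis using X10 \<open>i < nA\<close> by simp
        next
          case False then show ?thesis using Y0[of i "j - nA"] \<open>i < nA\<close> j by simp
        qed
      next
        case False
        show ?thesis
        proof (cases "j < nA")
          case True then show ?thesis using Y0[of j "i - nA"] False i sym[OF i j] by simp
        next
          case F2: False then show ?thesis using X20[of "i - nA" "j - nA"] False i j by simp
        qed
      qed
      then show "X $$ (i, j) = 0\<^sub>m ?n ?n $$ (i, j)" using i j by simp
    qed (use X in auto)
  qed
qed

end
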